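(* Let $k\ge1$, let $A_k$ be the matrix defined below, and let $\mathbf{b}=(\mathbf{w}_1,\mathbf{w}_2,c)^{\mathsf T}\in\mathbb{Z}^{2k+1}$ ($\mathbf{w}_1,\mathbf{w}_2\in\mathbb{Z}^k$, $c\in\mathbb{Z}$) with $\mathcal{F}_{A_k}(\mathbf{b})\ne\emptyset$. For every integer $s\in[l(\mathbf{b}),u(\mathbf{b})]$, the minimal degree and the vertex-connectivity of the induced subgraph of $G_{A_k,\mathbf{b},\mathcal{G}(A_k)}$ on $C_s(\mathbf{b})$ both equal $$|\mathrm{supp}(\mathbf{w}_1+s\mathbf{1}_k)|+|\mathrm{supp}(\mathbf{w}_2+(c-s)\mathbf{1}_k)|.$$
   Context: $I_k$ is the $k\times k$ identity, $\mathbf{1}_k$ the all-ones vector in $\mathbb{Z}^k$. Define $$A_k=\begin{pmatrix} I_k & I_k & 0 & 0 & -\mathbf{1}_k & \mathbf{0}\\ 0&0&I_k&I_k&\mathbf{0}&-\mathbf{1}_k\\ 0&0&0&0&1&1\end{pmatrix}\in\mathbb{Z}^{(2k+1)\times(4k+2)}$$ (zero blocks of appropriate sizes; last two columns are single columns). Fiber: $\mathcal{F}_A(\mathbf{b})=\{\mathbf{u}\in\mathbb{Z}^n_{\ge0}:A\mathbf{u}=\mathbf{b}\}$; for $\mathcal{M}\subset\mathbb{Z}^n$, $G_{A,\mathbf{b},\mathcal{M}}$ is the graph on $\mathcal{F}_A(\mathbf{b})$ with distinct $\mathbf{u},\mathbf{v}$ adjacent iff $\mathbf{u}-\mathbf{v}\in\pm\mathcal{M}$.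 The Graver basis $\mathcal{G}(A)$ is the set of $\sqsubseteq$-minimal elements of $(\ker A\cap\mathbb{Z}^n)\setminus\{\mathbf{0}\}$, where $\mathbf{u}\sqsubseteq\mathbf{v}$ iff $u_iv_i\ge0$ and $|u_i|\le|v_i|$ for all $i$. $\mathrm{supp}(\mathbf{w})$ is the set of indices of nonzero entries. $\mathbf{w}^-$ has entries $\max(-w_i,0)$; $l(\mathbf{b}):=\|\mathbf{w}_1^-\|_\infty$, $u(\mathbf{b}):=c-\|\mathbf{w}_2^-\|_\infty$; $C_s(\mathbf{b}):=\{\mathbf{u}\in\mathcal{F}_{A_k}(\mathbf{b}):u_{4k+1}=s\}$. A graph $G=(V,E)$ is $\ell$-vertex-connected if $|V|>\ell$ and deleting any fewer than $\ell$ vertices leaves it connected; the vertex-connectivity is the largest such $\ell$. *)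

theory Defs
  imports Main
begin

text \<open>Conventions: an integer vector in Z^n is a function nat => int that vanishes
  at indices >= n; coordinates are 0-indexed (paper index i corresponds to i-1).
  A matrix in Z^(m x n) is a function nat => nat => int, only entries i<m, j<n matter.\<close>

definition ZZn :: "nat \<Rightarrow> (nat \<Rightarrow> int) set" where
  "ZZn n = {u. \<forall>i\<ge>n. u i = 0}"

definition matvec :: "(nat \<Rightarrow> nat \<Rightarrow> int) \<Rightarrow> nat \<Rightarrow> (nat \<Rightarrow> int) \<Rightarrow> nat \<Rightarrow> int" where
  "matvec A n u = (\<lambda>i. \<Sum>j<n. A i j * u j)"

definition fiber :: "(nat \<Rightarrow> nat \<Rightarrow> int) \<Rightarrow> nat \<Rightarrow> nat \<Rightarrow> (nat \<Rightarrow> int) \<Rightarrow> (nat \<Rightarrow> int) set" where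
  "fiber A m n b = {u \<in> ZZn n. (\<forall>j<n. 0 \<le> u j) \<and> (\<forall>i<m. matvec A n u i = b i)}"

definition int_kernel :: "(nat \<Rightarrow> nat \<Rightarrow> int) \<Rightarrow> nat \<Rightarrow> nat \<Rightarrow> (nat \<Rightarrow> int) set" where
  "int_kernel A m n = {u \<in> ZZn n. \<forall>i<m. matvec A n u i = 0}"

definition conf_le :: "(nat \<Rightarrow> int) \<Rightarrow> (nat \<Rightarrow> int) \<Rightarrow> bool" where
  "conf_le u v \<longleftrightarrow> (\<forall>i. u i * v i \<ge> 0 \<and> \<bar>u i\<bar> \<le> \<bar>v i\<bar>)"

definition graver :: "(nat \<Rightarrow> nat \<Rightarrow> int) \<Rightarrow> nat \<Rightarrow> nat \<Rightarrow> (nat \<Rightarrow> int) set" where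
  "graver A m n = {v \<in> int_kernel A m n - {\<lambda>_. 0}.
      \<not> (\<exists>u \<in> int_kernel A m n - {\<lambda>_. 0}. conf_le u v \<and> u \<noteq> v)}"

definition fadj :: "(nat \<Rightarrow> int) set \<Rightarrow> (nat \<Rightarrow> int) \<Rightarrow> (nat \<Rightarrow> int) \<Rightarrow> bool" where
  "fadj M u v \<longleftrightarrow> u \<noteq> v \<and> ((\<lambda>i. u i - v i) \<in> M \<or> (\<lambda>i. v i - u i) \<in> M)"

definition min_degree :: "'a set \<Rightarrow> ('a \<Rightarrow> 'a \<Rightarrow> bool) \<Rightarrow> nat" where
  "min_degree V adj = Min ((\<lambda>u. card {v \<in> V. adj u v}) ` V)"

definition connected_on :: "'a set \<Rightarrow> ('a \<Rightarrow> 'a \<Rightarrow> bool) \<Rightarrow> bool" where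
  "connected_on V adj \<longleftrightarrow>
     (\<forall>x\<in>V. \<forall>y\<in>V. (\<lambda>a b. a \<in> V \<and> b \<in> V \<and> adj a b)\<^sup>*\<^sup>* x y)"

definition vertex_connected :: "'a set \<Rightarrow> ('a \<Rightarrow> 'a \<Rightarrow> bool) \<Rightarrow> nat \<Rightarrow> bool" where
  "vertex_connected V adj l \<longleftrightarrow> finite V \<and> card V > l \<and>
     (\<forall>S \<subseteq> V. card S < l \<longrightarrow> connected_on (V - S) adj)"

definition vertex_connectivity :: "'a set \<Rightarrow> ('a \<Rightarrow> 'a \<Rightarrow> bool) \<Rightarrow> nat" where
  "vertex_connectivity V adj = (GREATEST l. vertex_connected V adj l)"

definition Amat :: "nat \<Rightarrow> nat \<Rightarrow> nat \<Rightarrow> int" where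
  "Amat k i j =
     (if i < k then
        (if j = i \<or> j = k + i then 1 else if j = 4*k then -1 else 0)
      else if i < 2*k then
        (if j = 2*k + (i - k) \<or> j = 3*k + (i - k) then 1 else if j = 4*k + 1 then -1 else 0)
      else if i = 2*k then
        (if j = 4*k \<or> j = 4*k + 1 then 1 else 0)
      else 0)"

definition bvec :: "nat \<Rightarrow> (nat \<Rightarrow> int) \<Rightarrow> (nat \<Rightarrow> int) \<Rightarrow> int \<Rightarrow> nat \<Rightarrow> int" where
  "bvec k w1 w2 c = (\<lambda>i. if i < k then w1 i else if i < 2*k then w2 (i - k)
                         else if i = 2*k then c else 0)"

definition negnorm :: "nat \<Rightarrow> (nat \<Rightarrow> int) \<Rightarrow> int" where
  "negnorm k w = Max ((\<lambda>i. max (- w i) 0) ` {..<k})"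

definition lb :: "nat \<Rightarrow> (nat \<Rightarrow> int) \<Rightarrow> int" where
  "lb k w1 = negnorm k w1"

definition ub :: "nat \<Rightarrow> (nat \<Rightarrow> int) \<Rightarrow> int \<Rightarrow> int" where
  "ub k w2 c = c - negnorm k w2"

text \<open>C_s(b): elements of the fiber with coordinate 4k+1 (1-indexed) equal to s.\<close>
definition Cs :: "nat \<Rightarrow> (nat \<Rightarrow> int) \<Rightarrow> (nat \<Rightarrow> int) \<Rightarrow> int \<Rightarrow> int \<Rightarrow> (nat \<Rightarrow> int) set" where
  "Cs k w1 w2 c s = {u \<in> fiber (Amat k) (2*k+1) (4*k+2) (bvec k w1 w2 c). u (4*k) = s}"

end

theory Submission
  imports Defs
begin


definition W :: "nat set \<Rightarrow> (nat \<Rightarrow> int) \<Rightarrow> (nat \<Rightarrow> int) set" where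
 "W I a = {f. \<forall>j. (j \<in> I \<longrightarrow> 0 \<le> f j \<and> f j \<le> a j) \<and> (j \<notin> I \<longrightarrow> f j = 0)}"

definition gadj :: "(nat \<Rightarrow> int) \<Rightarrow> (nat \<Rightarrow> int) \<Rightarrow> bool" where
 "gadj f g \<longleftrightarrow> (\<exists>j. g = f(j := f j + 1) \<or> g = f(j := f j - 1))"

abbreviation RR :: "'a set \<Rightarrow> ('a \<Rightarrow> 'a \<Rightarrow> bool) \<Rightarrow> 'a \<Rightarrow> 'a \<Rightarrow> bool" where
  "RR V adj \<equiv> (\<lambda>a b. a \<in> V \<and> b \<in> V \<and> adj a b)\<^sup>*\<^sup>*"

lemma gadj_sym: "gadj f g \<Longrightarrow> gadj g f"
  unfolding gadj_def
proof (elim exE disjE)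
  fix j assume "g = f(j := f j + 1)"
  then have "f = g(j := g j - 1)" by (auto simp: fun_eq_iff)
  then show "\<exists>j. f = g(j := g j + 1) \<or> f = g(j := g j - 1)" by blast
next
  fix j assume "g = f(j := f j - 1)"
  then have "f = g(j := g j + 1)" by (auto simp: fun_eq_iff)
  then show "\<exists>j. f = g(j := g j + 1) \<or> f = g(j := g j - 1)" by blast
qed

lemma RR_sym:
  assumes "RR V adj x y" and "\<And>a b. adj a b \<Longrightarrow> adj b a"
  shows "RR V adj y x"
  using assms(1)
proof (induction rule: rtranclp_induct)
  case base then show ?case by simp
next
  case (step y z)
  then show ?case using assms(2)
    by (metis (mono_tags, lifting) converse_rtranclp_into_rtranclp)
qed

lemma RR_map:
  assumes "RR V adj x y" and "\<And>a b. a \<in> V \<Longrightarrow> b \<in> V \<Longrightarrow> adj a b \<Longrightarrow> adj' (h a) (h b)"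
    and "h ` V \<subseteq> V'"
  shows "RR V' adj' (h x) (h y)"
  using assms(1)
proof (induction rule: rtranclp_induct)
  case base then show ?case by simp
next
  case (step y z)
  then have "(\<lambda>a b. a \<in> V' \<and> b \<in> V' \<and> adj' a b) (h y) (h z)" using assms(2,3) by auto
  then show ?case using step(3) by (simp add: rtranclp.rtrancl_into_rtrancl)
qed

lemma RR_edge: "x \<in> V \<Longrightarrow> y \<in> V \<Longrightarrow> adj x y \<Longrightarrow> RR V adj x y"
  by (simp add: r_into_rtranclp)

lemma finite_W: "finite I \<Longrightarrow> finite (W I a)"
proof -
  assume fI: "finite I"
  define B where "B = (\<Union>j\<in>I. {0..a j})"
  have sub: "W I a \<subseteq> {f. \<forall>x. (x \<in> I \<longrightarrow> f x \<in> B) \<and> (x \<notin> I \<longrightarrow> f x = 0)}"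
  proof
    fix f assume "f \<in> W I a"
    then have "\<forall>x. (x \<in> I \<longrightarrow> f x \<in> B) \<and> (x \<notin> I \<longrightarrow> f x = 0)"
      unfolding W_def B_def by auto
    then show "f \<in> {f. \<forall>x. (x \<in> I \<longrightarrow> f x \<in> B) \<and> (x \<notin> I \<longrightarrow> f x = 0)}" by simp
  qed
  have "finite B" unfolding B_def using fI by (intro finite_UN_I) auto
  then have "finite {f. \<forall>x. (x \<in> I \<longrightarrow> f x \<in> B) \<and> (x \<notin> I \<longrightarrow> f x = (0::int))}"
    by (rule finite_set_of_finite_funs[OF fI])
  then show ?thesis using sub by (rule finite_subset[rotated])
qed

lemma card_W: assumes "finite I" "\<forall>j\<in>I. 1 \<le> a j" shows "card I < card (W I a)"
proof -
  let ?z = "(\<lambda>_. 0) :: nat \<Rightarrow> int"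
  let ?T = "insert ?z ((\<lambda>j. ?z(j := 1)) ` I)"
  have sub: "?T \<subseteq> W I a" using assms(2) unfolding W_def by auto
  have inj: "inj_on (\<lambda>j. ?z(j := 1)) I"
    by (rule inj_onI) (metis fun_upd_same fun_upd_other zero_neq_one)
  have nz: "?z \<notin> (\<lambda>j. ?z(j := 1)) ` I"
  proof
    assume "?z \<in> (\<lambda>j. ?z(j := 1)) ` I"
    then obtain j where "?z = ?z(j := 1)" by blast
    then have "?z j = (?z(j:=1)) j" by simp
    then show False by simp
  qed
  have "card ?T = card I + 1" using assms(1) inj nz by (simp add: card_image)
  moreover have "card ?T \<le> card (W I a)" using sub finite_W[OF assms(1)] card_mono by blast
  ultimately show ?thesis by simp
qed

lemma gadj_upd: "gadj g g' \<Longrightarrow> g i = g' i \<Longrightarrow> gadj (g(i:=t)) (g'(i:=t))"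
  unfolding gadj_def
proof (elim exE disjE)
  fix j assume a: "g' = g(j := g j + 1)" "g i = g' i"
  then have "j \<noteq> i" by (metis fun_upd_same add_cancel_left_right zero_neq_one)
  then have "g'(i:=t) = (g(i:=t))(j := (g(i:=t)) j + 1)" using a by (auto simp: fun_eq_iff)
  then show "\<exists>j. g'(i := t) = (g(i := t))(j := (g(i := t)) j + 1) \<or> g'(i := t) = (g(i := t))(j := (g(i := t)) j - 1)" by blast
next
  fix j assume a: "g' = g(j := g j - 1)" "g i = g' i"
  then have "j \<noteq> i" by (metis fun_upd_same diff_0_right diff_left_imp_eq zero_neq_one)
  then have "g'(i:=t) = (g(i:=t))(j := (g(i:=t)) j - 1)" using a by (auto simp: fun_eq_iff)
  then show "\<exists>j. g'(i := t) = (g(i := t))(j := (g(i := t)) j + 1) \<or> g'(i := t) = (g(i := t))(j := (g(i := t)) j - 1)" by blast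
qed

lemma grid_step:
  assumes fin: "finite I" and iI: "i \<notin> I" and ai: "1 \<le> a i" and aI: "\<forall>j\<in>I. 1 \<le> a j"
    and IH: "\<And>S. S \<subseteq> W I a \<Longrightarrow> card S < card I \<or> S = {} \<Longrightarrow> connected_on (W I a - S) gadj"
    and SW: "S \<subseteq> W (insert i I) a" and cS: "card S \<le> card I"
  shows "connected_on (W (insert i I) a - S) gadj"
proof -
  define W' where "W' = W (insert i I) a"
  define V where "V = W' - S"
  define m where "m = card I"
  define n where "n = a i"
  define St where "St t = {g \<in> W I a. g(i:=t) \<in> S}" for t
  have Wi: "0 \<le> f i \<and> f i \<le> n" if "f \<in> W'" for f
    using that unfolding W'_def W_def n_def by auto
  have W0: "f(i:=0) \<in> W I a" if "f \<in> W'" for f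
    using that iI unfolding W'_def W_def by auto
  have Wz: "g i = 0" if "g \<in> W I a" for g
    using that iI unfolding W_def by auto
  have Wup: "g(i:=t) \<in> W'" if "g \<in> W I a" "0 \<le> t" "t \<le> n" for g t
    using that unfolding W'_def W_def n_def by auto
  have Wset: "f(i:=t) \<in> W'" if "f \<in> W'" "0 \<le> t" "t \<le> n" for f t
    using Wup[OF W0[OF that(1)] that(2,3)] by simp
  have finW': "finite W'" unfolding W'_def using fin finite_W by blast
  have finS: "finite S" using SW finW' W'_def finite_subset by blast
  have cW: "m < card (W I a)" unfolding m_def using card_W fin aI by blast
  have finWI: "finite (W I a)" using fin finite_W by blast
  have St_sub: "St t \<subseteq> W I a" for t unfolding St_def by auto
  have cSt: "card (St t) \<le> card (S \<inter> {f. f i = t})" for t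
  proof -
    have "St t \<subseteq> (\<lambda>f. f(i:=0)) ` (S \<inter> {f. f i = t})"
    proof
      fix g assume g: "g \<in> St t"
      then have "g(i:=t) \<in> S \<inter> {f. f i = t}" unfolding St_def by auto
      moreover have "g = (g(i:=t))(i:=0)" using g Wz[of g] unfolding St_def by (auto simp: fun_eq_iff)
      ultimately show "g \<in> (\<lambda>f. f(i:=0)) ` (S \<inter> {f. f i = t})" by blast
    qed
    then have "card (St t) \<le> card ((\<lambda>f. f(i:=0)) ` (S \<inter> {f. f i = t}))"
      using finS by (intro card_mono) auto
    also have "\<dots> \<le> card (S \<inter> {f. f i = t})" by (rule card_image_le) (use finS in auto)
    finally show ?thesis .
  qed
  have cSt2: "card (St t) \<le> m" for t
  proof -
    have "card (S \<inter> {f. f i = t}) \<le> card S" using finS by (intro card_mono) auto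
    then show ?thesis using cSt[of t] cS m_def by linarith
  qed
  have NE: "\<exists>h\<in>W I a. h \<notin> St t" for t
  proof (rule ccontr)
    assume "\<not> ?thesis"
    then have "W I a \<subseteq> St t" by auto
    then have "card (W I a) \<le> card (St t)" using finWI St_sub by (meson card_mono finite_subset)
    then show False using cSt2[of t] cW by linarith
  qed
  have bad_sub: "S \<subseteq> {f. f i = t}" if "\<not> (card (St t) < m \<or> St t = {})" for t
  proof -
    have "card S \<le> card (S \<inter> {f. f i = t})" using that cSt[of t] cS m_def by linarith
    then have "S \<inter> {f. f i = t} = S" using finS by (intro card_seteq) auto
    then show ?thesis by blast
  qed
  have good_conn: "RR V gadj x y"
    if gd: "card (St t) < m \<or> St t = {}" and xy: "x \<in> V" "y \<in> V" "x i = t" "y i = t" for t x y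
  proof -
    have con: "connected_on (W I a - St t) gadj" using IH[OF St_sub] gd m_def by blast
    have xW: "x \<in> W'" "y \<in> W'" using xy V_def by auto
    have t: "0 \<le> t" "t \<le> n" using Wi[OF xW(1)] xy by auto
    have x0: "x(i:=0) \<in> W I a - St t"
    proof -
      have "(x(i:=0))(i:=t) = x" using xy by (auto simp: fun_eq_iff)
      then show ?thesis using W0[OF xW(1)] xy V_def unfolding St_def by auto
    qed
    have y0: "y(i:=0) \<in> W I a - St t"
    proof -
      have "(y(i:=0))(i:=t) = y" using xy by (auto simp: fun_eq_iff)
      then show ?thesis using W0[OF xW(2)] xy V_def unfolding St_def by auto
    qed
    have r: "RR (W I a - St t) gadj (x(i:=0)) (y(i:=0))" using con x0 y0 unfolding connected_on_def by blast
    have "RR V gadj ((x(i:=0))(i:=t)) ((y(i:=0))(i:=t))"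
    proof (rule RR_map[OF r])
      fix g g' assume "g \<in> W I a - St t" "g' \<in> W I a - St t" "gadj g g'"
      then have gg: "g \<in> W I a" "g' \<in> W I a" "gadj g g'" by auto
      have "g i = 0" "g' i = 0" using Wz gg(1) Wz gg(2) by blast+
      then have "g i = g' i" "gadj g g'" using gg by auto
      then show "gadj (g(i:=t)) (g'(i:=t))" by (rule gadj_upd[rotated])
    next
      show "(\<lambda>g. g(i:=t)) ` (W I a - St t) \<subseteq> V"
        using Wup t unfolding V_def St_def by auto
    qed
    moreover have "(x(i:=0))(i:=t) = x" "(y(i:=0))(i:=t) = y" using xy by (auto simp: fun_eq_iff)
    ultimately show ?thesis by simp
  qed
  have edge: "RR V gadj f (f(i := f i + 1))" if "f \<in> V" "f(i := f i + 1) \<in> V" for f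
  proof (rule RR_edge[OF that])
    show "gadj f (f(i := f i + 1))" unfolding gadj_def by blast
  qed
  have symR: "RR V gadj y x" if "RR V gadj x y" for x y
    by (rule RR_sym[OF that]) (rule gadj_sym)
  have Link: "RR V gadj x y" if t: "0 \<le> t" "t < n" and xy: "x \<in> V" "y \<in> V" "x i = t" "y i = t + 1" for t x y
  proof (cases "card (St t) < m \<or> St t = {}")
    case gt: True
    show ?thesis
    proof (cases "card (St (t+1)) < m \<or> St (t+1) = {}")
      case gt1: True
      have "card (St t \<union> St (t+1)) \<le> card (St t) + card (St (t+1))" by (rule card_Un_le)
      also have "\<dots> \<le> card (S \<inter> {f. f i = t}) + card (S \<inter> {f. f i = t + 1})"
        by (rule add_mono[OF cSt cSt])
      also have "\<dots> = card ((S \<inter> {f. f i = t}) \<union> (S \<inter> {f. f i = t + 1}))"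
        using finS by (intro card_Un_disjoint[symmetric]) auto
      also have "\<dots> \<le> card S" using finS by (intro card_mono) auto
      finally have lt: "card (St t \<union> St (t+1)) < card (W I a)" using cS cW m_def by linarith
      have "\<not> W I a \<subseteq> St t \<union> St (t+1)"
      proof
        assume sub: "W I a \<subseteq> St t \<union> St (t+1)"
        have "finite (St t \<union> St (t+1))" using finWI St_sub by (meson finite_Un finite_subset)
        then have "card (W I a) \<le> card (St t \<union> St (t+1))" using sub by (rule card_mono)
        then show False using lt by linarith
      qed
      then obtain h where h: "h \<in> W I a" "h \<notin> St t" "h \<notin> St (t+1)" by blast
      have h1: "h(i:=t) \<in> V" using h Wup[of h t] t unfolding V_def St_def by auto
      have h2: "h(i:=t+1) \<in> V" using h Wup[of h "t+1"] t unfolding V_def St_def by auto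
      have A: "RR V gadj x (h(i:=t))" by (rule good_conn[OF gt xy(1) h1 xy(3)]) simp
      have "(h(i:=t))(i := (h(i:=t)) i + 1) = h(i:=t+1)" by simp
      then have B: "RR V gadj (h(i:=t)) (h(i:=t+1))"
        using edge[of "h(i:=t)"] h2 h1 by metis
      have C: "RR V gadj (h(i:=t+1)) y" by (rule good_conn[OF gt1 h2 xy(2) _ xy(4)]) simp
      show ?thesis by (rule rtranclp_trans[OF rtranclp_trans[OF A B] C])
    next
      case bd: False
      have Ssub: "S \<subseteq> {f. f i = t + 1}" using bad_sub[OF bd] .
      have yV: "y(i:=t) \<in> V"
      proof -
        have "y \<in> W'" using xy V_def by auto
        then have "y(i:=t) \<in> W'" using Wset t by auto
        then show ?thesis using Ssub unfolding V_def by auto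
      qed
      have A: "RR V gadj x (y(i:=t))" by (rule good_conn[OF gt xy(1) yV xy(3)]) simp
      have "(y(i:=t))(i := (y(i:=t)) i + 1) = y" using xy by (auto simp: fun_eq_iff)
      then have B: "RR V gadj (y(i:=t)) y" using edge[of "y(i:=t)"] yV xy(2) by metis
      show ?thesis by (rule rtranclp_trans[OF A B])
    qed
  next
    case bd: False
    have Ssub: "S \<subseteq> {f. f i = t}" using bad_sub[OF bd] .
    have gt1: "St (t+1) = {}" using Ssub unfolding St_def by auto
    have xV: "x(i:=t+1) \<in> V"
    proof -
      have "x \<in> W'" using xy V_def by auto
      then have "x(i:=t+1) \<in> W'" using Wset t by auto
      then show ?thesis using Ssub unfolding V_def by auto
    qed
    have "x(i := x i + 1) = x(i:=t+1)" using xy by simp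
    then have A: "RR V gadj x (x(i:=t+1))" using edge[of x] xV xy(1) by metis
    have B: "RR V gadj (x(i:=t+1)) y" by (rule good_conn[of "t+1", OF _ xV xy(2) _ xy(4)]) (use gt1 in simp_all)
    show ?thesis by (rule rtranclp_trans[OF A B])
  qed
  have layer: "\<exists>z\<in>V. z i = t" if "0 \<le> t" "t \<le> n" for t
  proof -
    obtain h where h: "h \<in> W I a" "h \<notin> St t" using NE by blast
    then have "h(i:=t) \<in> V" using Wup that unfolding V_def St_def by auto
    then show ?thesis by (intro bexI[of _ "h(i:=t)"]) auto
  qed
  have n1: "1 \<le> n" using ai n_def by simp
  have same: "RR V gadj x y" if xy: "x \<in> V" "y \<in> V" "x i = y i" for x y
  proof -
    have xW: "x \<in> W'" using xy V_def by auto
    have x0: "0 \<le> x i" "x i \<le> n" using Wi[OF xW] by auto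
    show ?thesis
    proof (cases "x i < n")
      case True
      obtain z where z: "z \<in> V" "z i = x i + 1" using layer[of "x i + 1"] x0 True by auto
      have A: "RR V gadj x z" by (rule Link[OF x0(1) True xy(1) z(1) refl z(2)])
      have "RR V gadj y z" by (rule Link[OF x0(1) True xy(2) z(1)]) (use xy z in simp_all)
      then have B: "RR V gadj z y" by (rule symR)
      show ?thesis by (rule rtranclp_trans[OF A B])
    next
      case False
      then have xn: "x i = n" using x0 by simp
      obtain z where z: "z \<in> V" "z i = n - 1" using layer[of "n - 1"] n1 by auto
      have "RR V gadj z x" by (rule Link[of "n - 1" z x]) (use n1 z xy xn in simp_all)
      then have A: "RR V gadj x z" by (rule symR)
      have B: "RR V gadj z y" by (rule Link[of "n - 1" z y]) (use n1 z xy xn in simp_all)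
      show ?thesis by (rule rtranclp_trans[OF A B])
    qed
  qed
  have chain: "\<forall>x y. x \<in> V \<longrightarrow> y \<in> V \<longrightarrow> y i = x i + int d \<longrightarrow> RR V gadj x y" for d
  proof (induction d)
    case 0
    show ?case
    proof (intro allI impI)
      fix x y assume "x \<in> V" "y \<in> V" "y i = x i + int 0"
      then show "RR V gadj x y" using same by simp
    qed
  next
    case (Suc d)
    show ?case
    proof (intro allI impI)
      fix x y assume xy: "x \<in> V" "y \<in> V" "y i = x i + int (Suc d)"
      have xW: "x \<in> W'" "y \<in> W'" using xy V_def by auto
      have b: "0 \<le> x i + int d" "x i + int d < n" using Wi[OF xW(1)] Wi[OF xW(2)] xy by auto
      obtain z where z: "z \<in> V" "z i = x i + int d" using layer[of "x i + int d"] b by auto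
      have A: "RR V gadj x z" using Suc.IH xy(1) z by blast
      have B: "RR V gadj z y" by (rule Link[OF b(1) b(2) z(1) xy(2) z(2)]) (use xy in simp)
      show "RR V gadj x y" by (rule rtranclp_trans[OF A B])
    qed
  qed
  have "RR V gadj x y" if "x \<in> V" "y \<in> V" for x y
  proof (cases "x i \<le> y i")
    case True
    then have "y i = x i + int (nat (y i - x i))" by simp
    then show ?thesis using chain[of "nat (y i - x i)"] that by blast
  next
    case False
    then have "x i = y i + int (nat (x i - y i))" by simp
    then have "RR V gadj y x" using chain[of "nat (x i - y i)"] that by blast
    then show ?thesis by (rule symR)
  qed
  then show ?thesis unfolding connected_on_def V_def W'_def by blast
qed

lemma grid_conn:
  assumes "finite I"
  shows "(\<forall>j\<in>I. 1 \<le> a j) \<longrightarrow> (\<forall>S. S \<subseteq> W I a \<longrightarrow> card S < card I \<or> S = {} \<longrightarrow> connected_on (W I a - S) gadj)"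
  using assms
proof (induction I rule: finite_induct)
  case empty
  have "W {} a = {\<lambda>_. 0}" unfolding W_def by auto
  then show ?case unfolding connected_on_def by auto
next
  case (insert i I)
  show ?case
  proof (intro impI allI)
    fix S assume aI: "\<forall>j\<in>insert i I. 1 \<le> a j" and SW: "S \<subseteq> W (insert i I) a"
      and c: "card S < card (insert i I) \<or> S = {}"
    have "card S \<le> card I" using c insert(1,2) by auto
    then show "connected_on (W (insert i I) a - S) gadj"
      using grid_step[OF insert(1,2) _ _ _ SW] insert(3) aI by auto
  qed
qed


lemma grid_deg_ge:
  assumes fin: "finite I" and aI: "\<forall>j\<in>I. 1 \<le> a j" and f: "f \<in> W I a"
  shows "card I \<le> card {g \<in> W I a. gadj f g}"
proof -
  define nb where "nb j = (if f j < a j then f(j := f j + 1) else f(j := f j - 1))" for j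
  have nbj: "nb j j \<noteq> f j" for j unfolding nb_def by auto
  have nbo: "nb j l = f l" if "l \<noteq> j" for j l using that unfolding nb_def by auto
  have inj: "inj_on nb I"
  proof (rule inj_onI)
    fix j j' assume "j \<in> I" "j' \<in> I" "nb j = nb j'"
    show "j = j'"
    proof (rule ccontr)
      assume "j \<noteq> j'"
      then have "nb j' j = f j" using nbo by auto
      then show False using nbj[of j] \<open>nb j = nb j'\<close> by simp
    qed
  qed
  have sub: "nb ` I \<subseteq> {g \<in> W I a. gadj f g}"
  proof
    fix g assume "g \<in> nb ` I"
    then obtain j where j: "j \<in> I" "g = nb j" by blast
    have fj: "0 \<le> f j" "f j \<le> a j" using f j(1) unfolding W_def by auto
    have aj: "1 \<le> a j" using aI j(1) by blast
    have "g \<in> W I a"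
      using f j fj aj unfolding W_def nb_def by auto
    moreover have "gadj f g" unfolding gadj_def j(2) nb_def by (cases "f j < a j") auto
    ultimately show "g \<in> {g \<in> W I a. gadj f g}" by blast
  qed
  have "finite {g \<in> W I a. gadj f g}" using finite_W[OF fin] by simp
  then show ?thesis using card_inj_on_le[OF inj sub] by blast
qed

lemma grid_deg_0:
  assumes fin: "finite I" and aI: "\<forall>j\<in>I. 1 \<le> a j"
  shows "card {g \<in> W I a. gadj (\<lambda>_. 0) g} = card I"
proof -
  let ?z = "(\<lambda>_. 0) :: nat \<Rightarrow> int"
  have eq: "{g \<in> W I a. gadj ?z g} = (\<lambda>j. ?z(j := 1)) ` I"
  proof
    show "{g \<in> W I a. gadj ?z g} \<subseteq> (\<lambda>j. ?z(j := 1)) ` I"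
    proof
      fix g assume g: "g \<in> {g \<in> W I a. gadj ?z g}"
      then obtain j where j: "g = ?z(j := 1) \<or> g = ?z(j := -1)" unfolding gadj_def by auto
      have gW: "g \<in> W I a" using g by blast
      have "g j = 1 \<or> g j = -1" using j by auto
      then have "g j \<noteq> 0" by auto
      have "j \<in> I"
      proof (rule ccontr)
        assume "j \<notin> I"
        then have "g j = 0" using gW unfolding W_def by blast
        then show False using \<open>g j \<noteq> 0\<close> by simp
      qed
      moreover have "g = ?z(j := 1)"
      proof -
        have "0 \<le> g j" using gW \<open>j \<in> I\<close> unfolding W_def by auto
        then show ?thesis using j by auto
      qed
      ultimately show "g \<in> (\<lambda>j. ?z(j := 1)) ` I" by blast
    qed
  next
    show "(\<lambda>j. ?z(j := 1)) ` I \<subseteq> {g \<in> W I a. gadj ?z g}"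
    proof
      fix g assume "g \<in> (\<lambda>j. ?z(j := 1)) ` I"
      then obtain j where j: "j \<in> I" "g = ?z(j := 1)" by blast
      have "g \<in> W I a" using j aI unfolding W_def by auto
      moreover have "gadj ?z g" unfolding gadj_def j(2) by (intro exI[of _ j]) simp
      ultimately show "g \<in> {g \<in> W I a. gadj ?z g}" by blast
    qed
  qed
  have inj: "inj_on (\<lambda>j. ?z(j := 1)) I"
    by (rule inj_onI) (metis fun_upd_same fun_upd_other zero_neq_one)
  show ?thesis unfolding eq using card_image[OF inj] .
qed

lemma iso_deg:
  assumes bij: "bij_betw \<phi> V W'" and adj: "\<And>u v. u \<in> V \<Longrightarrow> v \<in> V \<Longrightarrow> adj u v \<longleftrightarrow> adj' (\<phi> u) (\<phi> v)"
    and u: "u \<in> V"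
  shows "card {v \<in> V. adj u v} = card {g \<in> W'. adj' (\<phi> u) g}"
proof -
  have inj: "inj_on \<phi> V" and im: "\<phi> ` V = W'" using bij unfolding bij_betw_def by auto
  have "\<phi> ` {v \<in> V. adj u v} = {g \<in> W'. adj' (\<phi> u) g}"
    using adj u im by auto
  moreover have "inj_on \<phi> {v \<in> V. adj u v}" using inj by (rule inj_on_subset) auto
  ultimately show ?thesis using card_image by metis
qed

lemma iso_conn:
  assumes bij: "bij_betw \<phi> V W'" and adj: "\<And>u v. u \<in> V \<Longrightarrow> v \<in> V \<Longrightarrow> adj u v \<longleftrightarrow> adj' (\<phi> u) (\<phi> v)"
    and S: "S \<subseteq> V" and con: "connected_on (W' - \<phi> ` S) adj'"
  shows "connected_on (V - S) adj"
  unfolding connected_on_def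
proof (intro ballI)
  fix x y assume x: "x \<in> V - S" and y: "y \<in> V - S"
  have inj: "inj_on \<phi> V" and im: "\<phi> ` V = W'" using bij unfolding bij_betw_def by auto
  define \<psi> where "\<psi> = inv_into V \<phi>"
  have ps1: "\<psi> (\<phi> z) = z" if "z \<in> V" for z using inj that unfolding \<psi>_def by simp
  have ps2: "\<psi> g \<in> V \<and> \<phi> (\<psi> g) = g" if "g \<in> W'" for g
    using that im unfolding \<psi>_def by (auto intro: inv_into_into f_inv_into_f)
  have fx: "\<phi> x \<in> W' - \<phi> ` S"
  proof -
    have "\<phi> x \<notin> \<phi> ` S" using x S inj by (auto dest: inj_onD)
    then show ?thesis using x im by auto
  qed
  have fy: "\<phi> y \<in> W' - \<phi> ` S"
  proof -
    have "\<phi> y \<notin> \<phi> ` S" using y S inj by (auto dest: inj_onD)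
    then show ?thesis using y im by auto
  qed
  have r: "RR (W' - \<phi> ` S) adj' (\<phi> x) (\<phi> y)" using con fx fy unfolding connected_on_def by blast
  have "RR (V - S) adj (\<psi> (\<phi> x)) (\<psi> (\<phi> y))"
  proof (rule RR_map[OF r])
    fix g g' assume g: "g \<in> W' - \<phi> ` S" "g' \<in> W' - \<phi> ` S" "adj' g g'"
    then have "\<psi> g \<in> V" "\<psi> g' \<in> V" "\<phi> (\<psi> g) = g" "\<phi> (\<psi> g') = g'" using ps2 by auto
    then show "adj (\<psi> g) (\<psi> g')" using adj g(3) by auto
  next
    show "\<psi> ` (W' - \<phi> ` S) \<subseteq> V - S"
    proof
      fix z assume "z \<in> \<psi> ` (W' - \<phi> ` S)"
      then obtain g where g: "g \<in> W'" "g \<notin> \<phi> ` S" "z = \<psi> g" by blast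
      then have zV: "z \<in> V" and fz: "\<phi> z = g" using ps2 by auto
      have "z \<notin> S"
      proof
        assume "z \<in> S"
        then have "g \<in> \<phi> ` S" using fz by blast
        then show False using g(2) by simp
      qed
      then show "z \<in> V - S" using zV by simp
    qed
  qed
  then show "RR (V - S) adj x y" using ps1 x y by simp
qed

lemma vc_le_deg:
  assumes vc: "vertex_connected V adj l" and v: "v \<in> V" and irr: "\<And>x. \<not> adj x x"
  shows "l \<le> card {w \<in> V. adj v w}"
proof (rule ccontr)
  assume "\<not> ?thesis"
  then have lt: "card {w \<in> V. adj v w} < l" by simp
  define N where "N = {w \<in> V. adj v w}"
  have fin: "finite V" and cV: "l < card V" and con: "\<forall>S\<subseteq>V. card S < l \<longrightarrow> connected_on (V - S) adj"
    using vc unfolding vertex_connected_def by auto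
  have NV: "N \<subseteq> V" unfolding N_def by auto
  have c: "connected_on (V - N) adj" using con NV lt N_def by blast
  have "card (insert v N) \<le> card N + 1" using fin NV finite_subset by (metis card_insert_le_m1 card_insert_if le_SucI Suc_eq_plus1 order_refl)
  moreover have "card N < l" using lt unfolding N_def .
  ultimately have "card (insert v N) < card V" using cV by linarith
  moreover have "finite (insert v N)" using fin NV finite_subset by blast
  ultimately have "\<not> V \<subseteq> insert v N" by (meson card_mono leD)
  then obtain w where w: "w \<in> V" "w \<notin> insert v N" by blast
  have vN: "v \<notin> N" using irr unfolding N_def by auto
  have "RR (V - N) adj v w" using c v vN w unfolding connected_on_def by blast
  then show False
  proof (cases rule: converse_rtranclpE)
    case base then show False using w by simp
  next
    case (step b)
    then have "b \<in> N" unfolding N_def by auto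
    then show False using step by auto
  qed
qed




definition Pset :: "nat \<Rightarrow> nat set" where "Pset k = {j. j < k \<or> (2*k \<le> j \<and> j < 3*k)}"

definition av :: "nat \<Rightarrow> (nat \<Rightarrow> int) \<Rightarrow> (nat \<Rightarrow> int) \<Rightarrow> int \<Rightarrow> int \<Rightarrow> nat \<Rightarrow> int" where
  "av k w1 w2 c s j = (if j < k then w1 j + s else w2 (j - 2*k) + (c - s))"

lemma row1: assumes "i < k" shows "matvec (Amat k) (4*k+2) u i = u i + u (k+i) - u (4*k)"
proof -
  have "Amat k i j * u j = (if j = i then u i else 0) + (if j = k+i then u (k+i) else 0) - (if j = 4*k then u (4*k) else 0)" for j
    using assms by (auto simp: Amat_def)
  then have "matvec (Amat k) (4*k+2) u i = (\<Sum>j<4*k+2. (if j = i then u i else 0) + (if j = k+i then u (k+i) else 0) - (if j = 4*k then u (4*k) else 0))"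
    unfolding matvec_def by simp
  also have "\<dots> = u i + u (k+i) - u (4*k)" using assms by (simp add: sum.distrib sum_subtractf)
  finally show ?thesis .
qed

lemma row2: assumes "i < k" shows "matvec (Amat k) (4*k+2) u (k+i) = u (2*k+i) + u (3*k+i) - u (4*k+1)"
proof -
  have "Amat k (k+i) j * u j = (if j = 2*k+i then u (2*k+i) else 0) + (if j = 3*k+i then u (3*k+i) else 0) - (if j = 4*k+1 then u (4*k+1) else 0)" for j
    using assms by (auto simp: Amat_def)
  then have "matvec (Amat k) (4*k+2) u (k+i) = (\<Sum>j<4*k+2. (if j = 2*k+i then u (2*k+i) else 0) + (if j = 3*k+i then u (3*k+i) else 0) - (if j = 4*k+1 then u (4*k+1) else 0))"
    unfolding matvec_def by simp
  also have "\<dots> = u (2*k+i) + u (3*k+i) - u (4*k+1)" using assms by (simp add: sum.distrib sum_subtractf)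
  finally show ?thesis .
qed

lemma row3: shows "matvec (Amat k) (4*k+2) u (2*k) = u (4*k) + u (4*k+1)"
proof -
  have "Amat k (2*k) j * u j = (if j = 4*k then u (4*k) else 0) + (if j = 4*k+1 then u (4*k+1) else 0)" for j
    by (auto simp: Amat_def)
  then have "matvec (Amat k) (4*k+2) u (2*k) = (\<Sum>j<4*k+2. (if j = 4*k then u (4*k) else 0) + (if j = 4*k+1 then u (4*k+1) else 0))"
    unfolding matvec_def by simp
  also have "\<dots> = u (4*k) + u (4*k+1)" by (simp add: sum.distrib)
  finally show ?thesis .
qed


lemma Cs_iff:
  assumes k: "1 \<le> k" and s0: "0 \<le> s" and cs0: "0 \<le> c - s"
  shows "u \<in> Cs k w1 w2 c s \<longleftrightarrow> (\<forall>j. 4*k+2 \<le> j \<longrightarrow> u j = 0) \<and> u (4*k) = s \<and> u (4*k+1) = c - s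
     \<and> (\<forall>j\<in>Pset k. 0 \<le> u j \<and> 0 \<le> u (j+k) \<and> u j + u (j+k) = av k w1 w2 c s j)"
    (is "?L \<longleftrightarrow> ?R")
proof
  assume L: ?L
  have Z: "\<forall>j. 4*k+2 \<le> j \<longrightarrow> u j = 0" and N: "\<forall>j<4*k+2. 0 \<le> u j"
    and M: "\<forall>i<2*k+1. matvec (Amat k) (4*k+2) u i = bvec k w1 w2 c i" and S: "u (4*k) = s"
    using L unfolding Cs_def fiber_def ZZn_def by auto
  have "matvec (Amat k) (4*k+2) u (2*k) = c" using M by (simp add: bvec_def)
  then have S1: "u (4*k+1) = c - s" using row3[of k u] S by simp
  have P: "0 \<le> u j \<and> 0 \<le> u (j+k) \<and> u j + u (j+k) = av k w1 w2 c s j" if j: "j \<in> Pset k" for j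
  proof -
    have nn: "0 \<le> u j" "0 \<le> u (j+k)" using N j unfolding Pset_def by auto
    show ?thesis
    proof (cases "j < k")
      case True
      have "matvec (Amat k) (4*k+2) u j = w1 j" using M True by (simp add: bvec_def)
      then have "u j + u (k+j) - u (4*k) = w1 j" using row1[OF True, of u] by simp
      then show ?thesis using nn S True by (simp add: av_def add.commute)
    next
      case False
      have "j - 2*k < k \<and> j = 2*k + (j - 2*k)" using j False unfolding Pset_def by auto
      then obtain i where i: "i < k" "j = 2*k + i" by blast
      have "matvec (Amat k) (4*k+2) u (k+i) = w2 i" using M i by (simp add: bvec_def)
      then have "u (2*k+i) + u (3*k+i) - u (4*k+1) = w2 i" using row2[OF i(1), of u] by simp
      moreover have "j + k = 3*k + i" using i by simp
      ultimately show ?thesis using nn S1 i False by (simp add: av_def)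
    qed
  qed
  show ?R using Z S S1 P by blast
next
  assume R: ?R
  have Z: "\<forall>j. 4*k+2 \<le> j \<longrightarrow> u j = 0" and S: "u (4*k) = s" and S1: "u (4*k+1) = c - s"
    and P: "\<forall>j\<in>Pset k. 0 \<le> u j \<and> 0 \<le> u (j+k) \<and> u j + u (j+k) = av k w1 w2 c s j"
    using R by auto
  have N: "0 \<le> u j" if j4: "j < 4*k+2" for j
  proof -
    have "j < 4*k \<or> j = 4*k \<or> j = 4*k+1" using j4 by linarith
    then consider "j \<in> Pset k" | "j \<notin> Pset k" "j < 4*k" | "j = 4*k" | "j = 4*k+1" by blast
    then show ?thesis
    proof cases
      case 1 then show ?thesis using P by blast
    next
      case 2
      then have "j - k \<in> Pset k" "j - k + k = j" unfolding Pset_def by auto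
      then show ?thesis using P by metis
    next
      case 3 then show ?thesis using S s0 by simp
    next
      case 4 then show ?thesis using S1 cs0 by simp
    qed
  qed
  have M: "matvec (Amat k) (4*k+2) u i = bvec k w1 w2 c i" if i2: "i < 2*k+1" for i
  proof -
    consider "i < k" | "k \<le> i" "i < 2*k" | "i = 2*k" using i2 by linarith
    then show ?thesis
    proof cases
      case 1
      then have "i \<in> Pset k" unfolding Pset_def by simp
      then have "u i + u (i+k) = w1 i + s" using P 1 by (simp add: av_def)
      then show ?thesis using row1[OF 1, of u] S 1 by (simp add: bvec_def add.commute)
    next
      case 2
      then have "i - k < k \<and> i = k + (i - k)" by auto
      then obtain i' where i': "i' < k" "i = k + i'" by blast
      then have "2*k + i' \<in> Pset k" unfolding Pset_def by simp
      then have e: "u (2*k+i') + u (2*k+i'+k) = av k w1 w2 c s (2*k+i')" using P by blast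
      have "av k w1 w2 c s (2*k+i') = w2 i' + (c - s)" by (simp add: av_def)
      moreover have "2*k+i'+k = 3*k+i'" by simp
      ultimately have "u (2*k+i') + u (3*k+i') = w2 i' + (c - s)" using e by metis
      then show ?thesis using row2[OF i'(1), of u] S1 i' by (simp add: bvec_def)
    next
      case 3 then show ?thesis using row3[of k u] S S1 by (simp add: bvec_def)
    qed
  qed
  show ?L unfolding Cs_def fiber_def ZZn_def using Z N M S by auto
qed


definition Iz :: "nat \<Rightarrow> (nat \<Rightarrow> int) \<Rightarrow> (nat \<Rightarrow> int) \<Rightarrow> int \<Rightarrow> int \<Rightarrow> nat set" where
  "Iz k w1 w2 c s = {j \<in> Pset k. av k w1 w2 c s j \<noteq> 0}"

definition phi :: "nat set \<Rightarrow> (nat \<Rightarrow> int) \<Rightarrow> nat \<Rightarrow> int" where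
  "phi I u = (\<lambda>j. if j \<in> I then u j else 0)"

definition ev :: "nat \<Rightarrow> nat \<Rightarrow> nat \<Rightarrow> int" where
  "ev k j = (\<lambda>l. if l = j then 1 else if l = j + k then -1 else 0)"

definition psi :: "nat \<Rightarrow> (nat \<Rightarrow> int) \<Rightarrow> (nat \<Rightarrow> int) \<Rightarrow> int \<Rightarrow> int \<Rightarrow> (nat \<Rightarrow> int) \<Rightarrow> nat \<Rightarrow> int" where
  "psi k w1 w2 c s g = (\<lambda>l. if l \<in> Pset k then g l else if k \<le> l \<and> l - k \<in> Pset k then av k w1 w2 c s (l-k) - g (l-k)
      else if l = 4*k then s else if l = 4*k+1 then c - s else 0)"

lemma idx1: "j \<in> Pset k \<Longrightarrow> j + k \<notin> Pset k \<and> j < 3*k \<and> j + k < 4*k \<and> k \<ge> 1"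
  unfolding Pset_def by auto

lemma idx2: "l \<notin> Pset k \<Longrightarrow> l < 4*k \<Longrightarrow> k \<le> l \<and> l - k \<in> Pset k \<and> l - k + k = l"
  unfolding Pset_def by auto

lemma idx3: "1 \<le> k \<Longrightarrow> 4*k \<notin> Pset k \<and> 4*k+1 \<notin> Pset k \<and> 4*k - k \<notin> Pset k \<and> 4*k+1-k \<notin> Pset k"
  unfolding Pset_def by auto

context
  fixes k :: nat and w1 w2 :: "nat \<Rightarrow> int" and c s :: int
  assumes k1: "1 \<le> k" and s0: "0 \<le> s" and cs0: "0 \<le> c - s"
   and a0: "\<forall>j\<in>Pset k. 0 \<le> av k w1 w2 c s j"
begin

lemma CsD:
  assumes "u \<in> Cs k w1 w2 c s"
  shows "\<And>j. 4*k+2 \<le> j \<Longrightarrow> u j = 0" "u (4*k) = s" "u (4*k+1) = c - s"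
    "\<And>j. j \<in> Pset k \<Longrightarrow> 0 \<le> u j \<and> 0 \<le> u (j+k) \<and> u j + u (j+k) = av k w1 w2 c s j"
  using assms Cs_iff[OF k1 s0 cs0] by blast+

lemma Fhi: "u \<in> Cs k w1 w2 c s \<Longrightarrow> v \<in> Cs k w1 w2 c s \<Longrightarrow> 4*k \<le> l \<Longrightarrow> u l = v l"
proof -
  assume u: "u \<in> Cs k w1 w2 c s" and v: "v \<in> Cs k w1 w2 c s" and l: "4*k \<le> l"
  then consider "l = 4*k" | "l = 4*k+1" | "4*k+2 \<le> l" by linarith
  then show "u l = v l" using CsD[OF u] CsD[OF v] by cases auto
qed

lemma F3: assumes u: "u \<in> Cs k w1 w2 c s" and l: "l \<in> Pset k"
  shows "phi (Iz k w1 w2 c s) u l = u l"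
proof (cases "l \<in> Iz k w1 w2 c s")
  case True then show ?thesis unfolding phi_def by simp
next
  case False
  then have "av k w1 w2 c s l = 0" using l unfolding Iz_def by auto
  then show ?thesis using CsD(4)[OF u l] False unfolding phi_def by auto
qed

lemma Fpair: "u \<in> Cs k w1 w2 c s \<Longrightarrow> p \<in> Pset k \<Longrightarrow> u (p+k) = av k w1 w2 c s p - u p"
  using CsD(4) by fastforce

lemma Iz_pos: "j \<in> Iz k w1 w2 c s \<Longrightarrow> 1 \<le> av k w1 w2 c s j"
  using a0 unfolding Iz_def by force

lemma Iz_fin: "finite (Iz k w1 w2 c s)"
proof -
  have "Iz k w1 w2 c s \<subseteq> {..<3*k}" unfolding Iz_def Pset_def by auto
  then show ?thesis using finite_subset by blast
qed

lemma phi_W: assumes u: "u \<in> Cs k w1 w2 c s"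
  shows "phi (Iz k w1 w2 c s) u \<in> W (Iz k w1 w2 c s) (av k w1 w2 c s)"
  unfolding W_def
proof (intro CollectI allI conjI impI)
  fix j assume j: "j \<in> Iz k w1 w2 c s"
  then have jP: "j \<in> Pset k" unfolding Iz_def by auto
  show "0 \<le> phi (Iz k w1 w2 c s) u j" "phi (Iz k w1 w2 c s) u j \<le> av k w1 w2 c s j"
    using CsD(4)[OF u jP] j unfolding phi_def by auto
next
  fix j assume "j \<notin> Iz k w1 w2 c s"
  then show "phi (Iz k w1 w2 c s) u j = 0" unfolding phi_def by simp
qed

lemma phi_eq: assumes u: "u \<in> Cs k w1 w2 c s" and v: "v \<in> Cs k w1 w2 c s"
  and e: "\<And>p. p \<in> Pset k \<Longrightarrow> u p = v p"
  shows "u = v"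
proof
  fix l
  show "u l = v l"
  proof (cases "l \<in> Pset k")
    case True then show ?thesis using e by simp
  next
    case False
    show ?thesis
    proof (cases "l < 4*k")
      case True
      then have "l - k \<in> Pset k" "l - k + k = l" using idx2 False by auto
      then show ?thesis using Fpair[OF u] Fpair[OF v] e by metis
    next
      case False
      then show ?thesis using Fhi[OF u v] by simp
    qed
  qed
qed

lemma phi_inj: "inj_on (phi (Iz k w1 w2 c s)) (Cs k w1 w2 c s)"
proof (rule inj_onI)
  fix u v assume u: "u \<in> Cs k w1 w2 c s" and v: "v \<in> Cs k w1 w2 c s"
    and eq: "phi (Iz k w1 w2 c s) u = phi (Iz k w1 w2 c s) v"
  show "u = v"
  proof (rule phi_eq[OF u v])
    fix p assume p: "p \<in> Pset k"
    show "u p = v p" using F3[OF u p] F3[OF v p] eq by metis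
  qed
qed

lemma psi_in: assumes g: "g \<in> W (Iz k w1 w2 c s) (av k w1 w2 c s)"
  shows "psi k w1 w2 c s g \<in> Cs k w1 w2 c s \<and> phi (Iz k w1 w2 c s) (psi k w1 w2 c s g) = g"
proof
  let ?h = "psi k w1 w2 c s g"
  have gP: "0 \<le> g j \<and> g j \<le> av k w1 w2 c s j" if "j \<in> Pset k" for j
  proof (cases "j \<in> Iz k w1 w2 c s")
    case True then show ?thesis using g unfolding W_def by auto
  next
    case False
    then have "g j = 0" using g unfolding W_def by auto
    then show ?thesis using a0 that by auto
  qed
  have i3: "4*k \<notin> Pset k" "4*k+1 \<notin> Pset k" "4*k - k \<notin> Pset k" "4*k+1-k \<notin> Pset k" using idx3[OF k1] by auto
  have "(\<forall>j. 4*k+2 \<le> j \<longrightarrow> ?h j = 0)"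
  proof (intro allI impI)
    fix j assume j: "4*k+2 \<le> j"
    then have "j \<notin> Pset k" "j - k \<notin> Pset k" unfolding Pset_def by auto
    then show "?h j = 0" using j unfolding psi_def by auto
  qed
  moreover have "?h (4*k) = s" using i3 unfolding psi_def by auto
  moreover have "?h (4*k+1) = c - s" using i3 unfolding psi_def by auto
  moreover have "\<forall>j\<in>Pset k. 0 \<le> ?h j \<and> 0 \<le> ?h (j+k) \<and> ?h j + ?h (j+k) = av k w1 w2 c s j"
  proof
    fix j assume j: "j \<in> Pset k"
    have "?h j = g j" using j unfolding psi_def by simp
    moreover have "?h (j+k) = av k w1 w2 c s j - g j" using j idx1[OF j] unfolding psi_def by auto
    ultimately show "0 \<le> ?h j \<and> 0 \<le> ?h (j+k) \<and> ?h j + ?h (j+k) = av k w1 w2 c s j" using gP[OF j] by auto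
  qed
  ultimately show "?h \<in> Cs k w1 w2 c s" using Cs_iff[OF k1 s0 cs0] by blast
  show "phi (Iz k w1 w2 c s) ?h = g"
  proof
    fix l show "phi (Iz k w1 w2 c s) ?h l = g l"
    proof (cases "l \<in> Iz k w1 w2 c s")
      case True
      then have "l \<in> Pset k" unfolding Iz_def by auto
      then show ?thesis using True unfolding phi_def psi_def by simp
    next
      case False
      then show ?thesis using g unfolding phi_def W_def by auto
    qed
  qed
qed

lemma phi_bij: "bij_betw (phi (Iz k w1 w2 c s)) (Cs k w1 w2 c s) (W (Iz k w1 w2 c s) (av k w1 w2 c s))"
  unfolding bij_betw_def
proof
  show "inj_on (phi (Iz k w1 w2 c s)) (Cs k w1 w2 c s)" by (rule phi_inj)
  show "phi (Iz k w1 w2 c s) ` Cs k w1 w2 c s = W (Iz k w1 w2 c s) (av k w1 w2 c s)"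
  proof
    show "phi (Iz k w1 w2 c s) ` Cs k w1 w2 c s \<subseteq> W (Iz k w1 w2 c s) (av k w1 w2 c s)"
      using phi_W by blast
    show "W (Iz k w1 w2 c s) (av k w1 w2 c s) \<subseteq> phi (Iz k w1 w2 c s) ` Cs k w1 w2 c s"
    proof
      fix g assume "g \<in> W (Iz k w1 w2 c s) (av k w1 w2 c s)"
      then show "g \<in> phi (Iz k w1 w2 c s) ` Cs k w1 w2 c s" using psi_in by (metis image_eqI)
    qed
  qed
qed

end


lemma ker_pair:
  assumes k1: "1 \<le> k" and d: "d \<in> int_kernel (Amat k) (2*k+1) (4*k+2)" and j: "j \<in> Pset k"
  shows "d j + d (j+k) = (if j < k then d (4*k) else d (4*k+1))"
proof -
  have M: "matvec (Amat k) (4*k+2) d i = 0" if "i < 2*k+1" for i using d that unfolding int_kernel_def by auto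
  show ?thesis
  proof (cases "j < k")
    case True
    have "matvec (Amat k) (4*k+2) d j = 0" using M True by simp
    then show ?thesis using row1[OF True, of d] True by (simp add: add.commute)
  next
    case False
    have "j - 2*k < k \<and> j = 2*k + (j - 2*k)" using j False unfolding Pset_def by auto
    then obtain i where i: "i < k" "j = 2*k + i" by blast
    have "matvec (Amat k) (4*k+2) d (k+i) = 0" using M i by simp
    then have "d (2*k+i) + d (3*k+i) - d (4*k+1) = 0" using row2[OF i(1), of d] by simp
    moreover have "j + k = 3*k+i" using i by simp
    ultimately show ?thesis using i False by simp
  qed
qed

lemma ker_I:
  assumes Z: "\<And>l. 4*k+2 \<le> l \<Longrightarrow> d l = 0"
    and R1: "\<And>i. i < k \<Longrightarrow> d i + d (k+i) - d (4*k) = 0"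
    and R2: "\<And>i. i < k \<Longrightarrow> d (2*k+i) + d (3*k+i) - d (4*k+1) = 0"
    and R3: "d (4*k) + d (4*k+1) = 0"
  shows "d \<in> int_kernel (Amat k) (2*k+1) (4*k+2)"
  unfolding int_kernel_def ZZn_def
proof (intro CollectI conjI allI impI)
  fix l :: nat assume "4*k+2 \<le> l" then show "d l = 0" using Z by simp
next
  fix i assume i2: "i < 2*k+1"
  consider "i < k" | "k \<le> i" "i < 2*k" | "i = 2*k" using i2 by linarith
  then show "matvec (Amat k) (4*k+2) d i = 0"
  proof cases
    case 1 then show ?thesis using row1[OF 1, of d] R1[OF 1] by simp
  next
    case 2
    then have "i - k < k \<and> i = k + (i - k)" by auto
    then obtain i' where i': "i' < k" "i = k + i'" by blast
    then show ?thesis using row2[OF i'(1), of d] R2[OF i'(1)] by simp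
  next
    case 3 then show ?thesis using row3[of k d] R3 by simp
  qed
qed

lemma ev_ker: assumes k1: "1 \<le> k" and j: "j \<in> Pset k"
  shows "ev k j \<in> int_kernel (Amat k) (2*k+1) (4*k+2)"
proof (rule ker_I)
  fix l :: nat assume "4*k+2 \<le> l" then show "ev k j l = 0" using idx1[OF j] unfolding ev_def by auto
next
  fix i assume "i < k" then show "ev k j i + ev k j (k+i) - ev k j (4*k) = 0"
    using j unfolding ev_def Pset_def by auto
next
  fix i assume "i < k" then show "ev k j (2*k+i) + ev k j (3*k+i) - ev k j (4*k+1) = 0"
    using j unfolding ev_def Pset_def by auto
next
  show "ev k j (4*k) + ev k j (4*k+1) = 0" using j unfolding ev_def Pset_def by auto
qed

lemma neg_ker: assumes d: "d \<in> int_kernel A m n" shows "(\<lambda>l. - d l) \<in> int_kernel A m n"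
  using d unfolding int_kernel_def ZZn_def matvec_def by (simp add: sum_negf)

lemma G1: assumes k1: "1 \<le> k" and j: "j \<in> Pset k"
  shows "ev k j \<in> graver (Amat k) (2*k+1) (4*k+2)"
proof -
  let ?K = "int_kernel (Amat k) (2*k+1) (4*k+2)"
  have K: "ev k j \<in> ?K" by (rule ev_ker[OF k1 j])
  have nz: "ev k j \<noteq> (\<lambda>_. 0)"
  proof
    assume "ev k j = (\<lambda>_. 0)"
    then have "ev k j j = 0" by simp
    then show False unfolding ev_def by simp
  qed
  have ix: "j + k \<noteq> j" "j < 4*k" "j + k < 4*k" using idx1[OF j] by auto
  have min: "e = ev k j" if e: "e \<in> ?K - {\<lambda>_. 0}" "conf_le e (ev k j)" for e
  proof -
    have cl: "e l * ev k j l \<ge> 0 \<and> \<bar>e l\<bar> \<le> \<bar>ev k j l\<bar>" for l using e(2) unfolding conf_le_def by blast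
    have z: "e l = 0" if "l \<noteq> j" "l \<noteq> j + k" for l using cl[of l] that unfolding ev_def by auto
    have z4: "e (4*k) = 0" "e (4*k+1) = 0" using z ix by auto
    have p: "e j + e (j+k) = 0" using ker_pair[OF k1 _ j, of e] e(1) z4 by (auto split: if_splits)
    have ej: "e j = 0 \<or> e j = 1" using cl[of j] unfolding ev_def by auto
    have "e j \<noteq> 0"
    proof
      assume "e j = 0"
      then have "e (j+k) = 0" using p by simp
      then have "e = (\<lambda>_. 0)" using z \<open>e j = 0\<close> by (metis)
      then show False using e(1) by simp
    qed
    then have "e j = 1" "e (j+k) = -1" using ej p by auto
    then show "e = ev k j" unfolding ev_def using z ix by (auto simp: fun_eq_iff)
  qed
  show ?thesis unfolding graver_def using K nz min by blast
qed

lemma G2: assumes k1: "1 \<le> k" and dG: "d \<in> graver (Amat k) (2*k+1) (4*k+2)"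
  and d4: "d (4*k) = 0" "d (4*k+1) = 0"
  shows "\<exists>j\<in>Pset k. d = ev k j \<or> d = (\<lambda>l. - ev k j l)"
proof -
  let ?K = "int_kernel (Amat k) (2*k+1) (4*k+2)"
  have dK: "d \<in> ?K" and dnz: "d \<noteq> (\<lambda>_. 0)"
    and dmin: "\<And>e. e \<in> ?K - {\<lambda>_. 0} \<Longrightarrow> conf_le e d \<Longrightarrow> e = d"
    using dG unfolding graver_def by auto
  have dZ: "d l = 0" if "4*k+2 \<le> l" for l using dK that unfolding int_kernel_def ZZn_def by auto
  have dp: "d (p+k) = - d p" if "p \<in> Pset k" for p using ker_pair[OF k1 dK that] d4 by (auto split: if_splits)
  have "\<exists>j\<in>Pset k. d j \<noteq> 0"
  proof (rule ccontr)
    assume "\<not> ?thesis"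
    then have zP: "d p = 0" if "p \<in> Pset k" for p using that by blast
    have "d l = 0" for l
    proof (cases "l \<in> Pset k")
      case True then show ?thesis using zP by simp
    next
      case False
      show ?thesis
      proof (cases "l < 4*k")
        case True
        then have lk: "l - k \<in> Pset k" "l - k + k = l" using idx2 False by auto
        have "d (l - k + k) = - d (l - k)" by (rule dp[OF lk(1)])
        also have "\<dots> = 0" using zP[OF lk(1)] by simp
        finally show ?thesis using lk(2) by simp
      next
        case False
        then consider "l = 4*k" | "l = 4*k+1" | "4*k+2 \<le> l" by linarith
        then show ?thesis using d4 dZ by cases auto
      qed
    qed
    then have "d = (\<lambda>_. 0)" by (rule ext)
    then show False using dnz by simp
  qed
  then obtain j where j: "j \<in> Pset k" "d j \<noteq> 0" by blast
  have ix: "j + k \<noteq> j" using idx1[OF j(1)] by auto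
  define e where "e = (if 0 < d j then ev k j else (\<lambda>l. - ev k j l))"
  have eK: "e \<in> ?K" unfolding e_def using ev_ker[OF k1 j(1)] neg_ker by auto
  have enz: "e \<noteq> (\<lambda>_. 0)"
  proof
    assume "e = (\<lambda>_. 0)"
    then have "e j = 0" by simp
    then show False unfolding e_def ev_def by (auto split: if_splits)
  qed
  have "conf_le e d" unfolding conf_le_def
  proof
    fix l
    show "e l * d l \<ge> 0 \<and> \<bar>e l\<bar> \<le> \<bar>d l\<bar>"
    proof (cases "l = j")
      case True then show ?thesis using j(2) unfolding e_def ev_def by auto
    next
      case False
      show ?thesis
      proof (cases "l = j + k")
        case True
        have "d l = - d j" using dp[OF j(1)] True by simp
        then show ?thesis using j(2) False True unfolding e_def ev_def by auto
      next
        case False2: False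
        then show ?thesis using False unfolding e_def ev_def by auto
      qed
    qed
  qed
  then have "e = d" using dmin eK enz by blast
  then show ?thesis using j(1) unfolding e_def by (auto split: if_splits)
qed


lemma upd_swap1: "g = f(j := f j - 1) \<Longrightarrow> f = g(j := g j + (1::int))" by (auto simp: fun_eq_iff)
lemma upd_swap2: "g = f(j := f j + 1) \<Longrightarrow> f = g(j := g j - (1::int))" by (auto simp: fun_eq_iff)

context
  fixes k :: nat and w1 w2 :: "nat \<Rightarrow> int" and c s :: int
  assumes k1: "1 \<le> k" and s0: "0 \<le> s" and cs0: "0 \<le> c - s"
   and a0: "\<forall>j\<in>Pset k. 0 \<le> av k w1 w2 c s j"
begin

lemma adjL:
  assumes u: "u \<in> Cs k w1 w2 c s" and v: "v \<in> Cs k w1 w2 c s" and j: "j \<in> Pset k"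
    and d: "(\<lambda>i. u i - v i) = ev k j"
  shows "phi (Iz k w1 w2 c s) v = (phi (Iz k w1 w2 c s) u)(j := phi (Iz k w1 w2 c s) u j - 1)"
proof
  let ?I = "Iz k w1 w2 c s"
  have dl: "u l - v l = ev k j l" for l using fun_cong[OF d, of l] by simp
  have dj: "u j - v j = 1" using dl[of j] unfolding ev_def by simp
  have uj: "0 \<le> u j \<and> 0 \<le> u (j+k) \<and> u j + u (j+k) = av k w1 w2 c s j" using CsD(4)[OF k1 s0 cs0 a0 u j] .
  have vj: "0 \<le> v j" using CsD(4)[OF k1 s0 cs0 a0 v j] by simp
  have jI: "j \<in> ?I" using uj vj dj j unfolding Iz_def by auto
  fix l
  show "phi ?I v l = ((phi ?I u)(j := phi ?I u j - 1)) l"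
  proof (cases "l = j")
    case True then show ?thesis using jI dj unfolding phi_def by simp
  next
    case False
    show ?thesis
    proof (cases "l \<in> ?I")
      case True
      then have lP: "l \<in> Pset k" unfolding Iz_def by auto
      have "l \<noteq> j + k" using lP idx1[OF j] by auto
      then have "ev k j l = 0" using False unfolding ev_def by simp
      then show ?thesis using dl[of l] True False unfolding phi_def by simp
    next
      case False2: False
      then show ?thesis using False unfolding phi_def by simp
    qed
  qed
qed

lemma adjR:
  assumes u: "u \<in> Cs k w1 w2 c s" and v: "v \<in> Cs k w1 w2 c s"
    and e: "phi (Iz k w1 w2 c s) v = (phi (Iz k w1 w2 c s) u)(j := phi (Iz k w1 w2 c s) u j - 1)"
  shows "j \<in> Pset k \<and> (\<lambda>i. u i - v i) = ev k j"
proof -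
  let ?I = "Iz k w1 w2 c s"
  have el: "phi ?I v l = (if l = j then phi ?I u j - 1 else phi ?I u l)" for l using fun_cong[OF e, of l] by simp
  have jI: "j \<in> ?I"
  proof (rule ccontr)
    assume "j \<notin> ?I"
    then have "phi ?I v j = 0" "phi ?I u j = 0" unfolding phi_def by auto
    then show False using el[of j] by simp
  qed
  then have jP: "j \<in> Pset k" unfolding Iz_def by auto
  have ix: "j + k \<notin> Pset k" "j < 3*k" "j + k < 4*k" using idx1[OF jP] by auto
  have "u l - v l = ev k j l" for l
  proof (cases "l \<in> Pset k")
    case True
    have "u l - v l = phi ?I u l - phi ?I v l" using F3[OF k1 s0 cs0 a0 u True] F3[OF k1 s0 cs0 a0 v True] by simp
    also have "\<dots> = (if l = j then 1 else 0)" using el[of l] by simp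
    also have "\<dots> = ev k j l" using True ix unfolding ev_def by auto
    finally show ?thesis .
  next
    case False
    show ?thesis
    proof (cases "l < 4*k")
      case True
      then have lk: "l - k \<in> Pset k" "l - k + k = l" using idx2 False by auto
      define p where "p = l - k"
      have pP: "p \<in> Pset k" and lp: "l = p + k" using lk p_def by auto
      have "u l - v l = - (u p - v p)" using Fpair[OF k1 s0 cs0 a0 u pP] Fpair[OF k1 s0 cs0 a0 v pP] lp by simp
      also have "u p - v p = phi ?I u p - phi ?I v p" using F3[OF k1 s0 cs0 a0 u pP] F3[OF k1 s0 cs0 a0 v pP] by simp
      also have "\<dots> = (if p = j then 1 else 0)" using el[of p] by simp
      finally have "u l - v l = - (if p = j then 1 else 0)" .
      moreover have "l \<noteq> j" using False jP by auto
      moreover have "(l = j + k) = (p = j)" using lp by auto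
      ultimately show ?thesis unfolding ev_def by auto
    next
      case False2: False
      then have "u l = v l" using Fhi[OF k1 s0 cs0 a0 u v] by simp
      moreover have "ev k j l = 0" using False2 ix unfolding ev_def by auto
      ultimately show ?thesis by simp
    qed
  qed
  then show ?thesis using jP by blast
qed

lemma adj_iff:
  assumes u: "u \<in> Cs k w1 w2 c s" and v: "v \<in> Cs k w1 w2 c s"
  shows "fadj (graver (Amat k) (2*k+1) (4*k+2)) u v \<longleftrightarrow> gadj (phi (Iz k w1 w2 c s) u) (phi (Iz k w1 w2 c s) v)"
proof -
  let ?I = "Iz k w1 w2 c s" and ?G = "graver (Amat k) (2*k+1) (4*k+2)"
  have one: "gadj (phi ?I x) (phi ?I y)" if x: "x \<in> Cs k w1 w2 c s" and y: "y \<in> Cs k w1 w2 c s"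
     and dG: "(\<lambda>i. x i - y i) \<in> ?G" for x y
  proof -
    have "(\<lambda>i. x i - y i) (4*k) = 0" "(\<lambda>i. x i - y i) (4*k+1) = 0"
      using Fhi[OF k1 s0 cs0 a0 x y] by auto
    then obtain j where j: "j \<in> Pset k" and
      dd: "(\<lambda>i. x i - y i) = ev k j \<or> (\<lambda>i. x i - y i) = (\<lambda>l. - ev k j l)"
      using G2[OF k1 dG] by blast
    show ?thesis
    proof (cases "(\<lambda>i. x i - y i) = ev k j")
      case True
      then have "phi ?I y = (phi ?I x)(j := phi ?I x j - 1)" using adjL[OF x y j] by blast
      then show ?thesis unfolding gadj_def by blast
    next
      case False
      then have "(\<lambda>i. x i - y i) = (\<lambda>l. - ev k j l)" using dd by blast
      then have "(\<lambda>i. y i - x i) = ev k j"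
      proof -
        assume h: "(\<lambda>i. x i - y i) = (\<lambda>l. - ev k j l)"
        show ?thesis
        proof
          fix i
          have "x i - y i = - ev k j i" using fun_cong[OF h, of i] by simp
          then show "y i - x i = ev k j i" by simp
        qed
      qed
      then have "phi ?I x = (phi ?I y)(j := phi ?I y j - 1)" using adjL[OF y x j] by blast
      then have "phi ?I y = (phi ?I x)(j := phi ?I x j + 1)" by (rule upd_swap1)
      then show ?thesis unfolding gadj_def by blast
    qed
  qed
  show ?thesis
  proof
    assume "fadj ?G u v"
    then have "(\<lambda>i. u i - v i) \<in> ?G \<or> (\<lambda>i. v i - u i) \<in> ?G" unfolding fadj_def by blast
    then show "gadj (phi ?I u) (phi ?I v)" using one[OF u v] one[OF v u] gadj_sym by blast
  next
    assume "gadj (phi ?I u) (phi ?I v)"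
    then obtain j where j: "phi ?I v = (phi ?I u)(j := phi ?I u j + 1) \<or> phi ?I v = (phi ?I u)(j := phi ?I u j - 1)"
      unfolding gadj_def by blast
    show "fadj ?G u v"
    proof (cases "phi ?I v = (phi ?I u)(j := phi ?I u j - 1)")
      case True
      then have jd: "j \<in> Pset k" "(\<lambda>i. u i - v i) = ev k j" using adjR[OF u v] by auto
      have "u j - v j = 1" using fun_cong[OF jd(2), of j] by (simp add: ev_def)
      then have "u \<noteq> v" by auto
      then show ?thesis unfolding fadj_def using G1[OF k1 jd(1)] jd(2) by simp
    next
      case False
      then have "phi ?I v = (phi ?I u)(j := phi ?I u j + 1)" using j by blast
      then have "phi ?I u = (phi ?I v)(j := phi ?I v j - 1)" by (rule upd_swap2)
      then have jd: "j \<in> Pset k" "(\<lambda>i. v i - u i) = ev k j" using adjR[OF v u] by auto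
      have "v j - u j = 1" using fun_cong[OF jd(2), of j] by (simp add: ev_def)
      then have "u \<noteq> v" by auto
      then show ?thesis unfolding fadj_def using G1[OF k1 jd(1)] jd(2) by simp
    qed
  qed
qed

end


lemma negnorm_ge: assumes "i < k" shows "max (- w i) 0 \<le> negnorm k w"
  unfolding negnorm_def using assms by (intro Max_ge) auto

lemma card_Iz: "card (Iz k w1 w2 c s) = card {i. i < k \<and> w1 i + s \<noteq> 0} + card {i. i < k \<and> w2 i + (c - s) \<noteq> 0}"
proof -
  let ?A = "{i. i < k \<and> w1 i + s \<noteq> 0}" and ?B = "{i. i < k \<and> w2 i + (c - s) \<noteq> 0}"
  have eq: "Iz k w1 w2 c s = ?A \<union> (\<lambda>i. 2*k+i) ` ?B"
  proof
    show "Iz k w1 w2 c s \<subseteq> ?A \<union> (\<lambda>i. 2*k+i) ` ?B"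
    proof
      fix j assume j: "j \<in> Iz k w1 w2 c s"
      show "j \<in> ?A \<union> (\<lambda>i. 2*k+i) ` ?B"
      proof (cases "j < k")
        case True then show ?thesis using j unfolding Iz_def av_def by auto
      next
        case False
        then have "2*k \<le> j" "j < 3*k" "w2 (j - 2*k) + (c - s) \<noteq> 0" using j unfolding Iz_def av_def Pset_def by auto
        then have "j - 2*k \<in> ?B" "j = 2*k + (j - 2*k)" by auto
        then show ?thesis by blast
      qed
    qed
    show "?A \<union> (\<lambda>i. 2*k+i) ` ?B \<subseteq> Iz k w1 w2 c s"
      unfolding Iz_def av_def Pset_def by auto
  qed
  have "?A \<inter> (\<lambda>i. 2*k+i) ` ?B = {}" by auto
  moreover have "finite ?A" "finite ((\<lambda>i. 2*k+i) ` ?B)" by auto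
  ultimately have "card (Iz k w1 w2 c s) = card ?A + card ((\<lambda>i. 2*k+i) ` ?B)" unfolding eq by (simp add: card_Un_disjoint)
  moreover have "card ((\<lambda>i. 2*k+i) ` ?B) = card ?B" by (rule card_image) (auto simp: inj_on_def)
  ultimately show ?thesis by simp
qed

theorem lemma6:
  fixes k :: nat and w1 w2 :: "nat \<Rightarrow> int" and c s :: int
  assumes "k \<ge> 1"
    and "fiber (Amat k) (2*k+1) (4*k+2) (bvec k w1 w2 c) \<noteq> {}"
    and "lb k w1 \<le> s" and "s \<le> ub k w2 c"
  shows "min_degree (Cs k w1 w2 c s) (fadj (graver (Amat k) (2*k+1) (4*k+2)))
           = card {i. i < k \<and> w1 i + s \<noteq> 0} + card {i. i < k \<and> w2 i + (c - s) \<noteq> 0}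
       \<and> vertex_connectivity (Cs k w1 w2 c s) (fadj (graver (Amat k) (2*k+1) (4*k+2)))
           = card {i. i < k \<and> w1 i + s \<noteq> 0} + card {i. i < k \<and> w2 i + (c - s) \<noteq> 0}"
proof -
  have k1: "1 \<le> k" using assms(1) .
  have lb: "negnorm k w1 \<le> s" using assms(3) unfolding lb_def .
  have ub: "negnorm k w2 \<le> c - s" using assms(4) unfolding ub_def by simp
  have s0: "0 \<le> s" using negnorm_ge[of 0 k w1] k1 lb by simp
  have cs0: "0 \<le> c - s" using negnorm_ge[of 0 k w2] k1 ub by simp
  have a0: "\<forall>j\<in>Pset k. 0 \<le> av k w1 w2 c s j"
  proof
    fix j assume j: "j \<in> Pset k"
    show "0 \<le> av k w1 w2 c s j"
    proof (cases "j < k")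
      case True then show ?thesis using negnorm_ge[of j k w1] lb unfolding av_def by simp
    next
      case False
      then have "j - 2*k < k" using j unfolding Pset_def by auto
      then show ?thesis using negnorm_ge[of "j - 2*k" k w2] ub False unfolding av_def by simp
    qed
  qed
  define V where "V = Cs k w1 w2 c s"
  define G where "G = graver (Amat k) (2*k+1) (4*k+2)"
  define I where "I = Iz k w1 w2 c s"
  define a where "a = av k w1 w2 c s"
  define m where "m = card I"
  define ph where "ph = phi I"
  have bij: "bij_betw ph V (W I a)" unfolding ph_def V_def I_def a_def using phi_bij[OF k1 s0 cs0 a0] .
  have adj: "fadj G u v \<longleftrightarrow> gadj (ph u) (ph v)" if "u \<in> V" "v \<in> V" for u v
    using adj_iff[OF k1 s0 cs0 a0] that unfolding G_def ph_def I_def V_def by blast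
  have finI: "finite I" unfolding I_def using Iz_fin[OF k1 s0 cs0 a0] .
  have aI: "\<forall>j\<in>I. 1 \<le> a j" unfolding I_def a_def using Iz_pos[OF k1 s0 cs0 a0] by blast
  have finW: "finite (W I a)" using finite_W[OF finI] .
  have finV: "finite V" using bij finW bij_betw_finite by blast
  have deg: "card {v \<in> V. fadj G u v} = card {g \<in> W I a. gadj (ph u) g}" if "u \<in> V" for u
  proof (rule iso_deg[OF bij _ that])
    fix x y assume "x \<in> V" "y \<in> V" then show "fadj G x y \<longleftrightarrow> gadj (ph x) (ph y)" by (rule adj)
  qed
  have zW: "(\<lambda>_. 0) \<in> W I a" unfolding W_def using aI by auto
  define u0 where "u0 = psi k w1 w2 c s (\<lambda>_. 0)"
  have u0: "u0 \<in> V" "ph u0 = (\<lambda>_. 0)"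
    using psi_in[OF k1 s0 cs0 a0, of "\<lambda>_. 0"] zW unfolding u0_def V_def ph_def I_def a_def by auto
  have deg0: "card {v \<in> V. fadj G u0 v} = m"
    using deg[OF u0(1)] u0(2) grid_deg_0[OF finI aI] m_def by simp
  have degge: "m \<le> card {v \<in> V. fadj G u v}" if "u \<in> V" for u
  proof -
    have "ph u \<in> W I a" using bij that unfolding bij_betw_def by auto
    then show ?thesis using deg[OF that] grid_deg_ge[OF finI aI] m_def by simp
  qed
  have md: "min_degree V (fadj G) = m" unfolding min_degree_def
  proof (rule Min_eqI)
    show "finite ((\<lambda>u. card {v \<in> V. fadj G u v}) ` V)" using finV by simp
    fix y assume "y \<in> (\<lambda>u. card {v \<in> V. fadj G u v}) ` V"
    then obtain u where "u \<in> V" "y = card {v \<in> V. fadj G u v}" by blast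
    then show "m \<le> y" using degge by simp
  next
    have "card {v \<in> V. fadj G u0 v} \<in> (\<lambda>u. card {v \<in> V. fadj G u v}) ` V" using u0(1) by (rule imageI)
    then show "m \<in> (\<lambda>u. card {v \<in> V. fadj G u v}) ` V" using deg0 by simp
  qed
  have vcm: "vertex_connected V (fadj G) m" unfolding vertex_connected_def
  proof (intro conjI allI impI)
    show "finite V" by (rule finV)
    have "card V = card (W I a)" using bij bij_betw_same_card by blast
    then show "m < card V" using card_W[OF finI aI] m_def by simp
  next
    fix S assume SV: "S \<subseteq> V" and cS: "card S < m"
    have "ph ` S \<subseteq> W I a" using bij SV unfolding bij_betw_def by auto
    moreover have "card (ph ` S) < card I" using card_image_le[of S ph] cS m_def finV SV finite_subset by fastforce
    ultimately have con: "connected_on (W I a - ph ` S) gadj" using grid_conn[OF finI] aI by blast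
    show "connected_on (V - S) (fadj G)"
    proof (rule iso_conn[OF bij _ SV con])
      fix x y assume "x \<in> V" "y \<in> V" then show "fadj G x y \<longleftrightarrow> gadj (ph x) (ph y)" by (rule adj)
    qed
  qed
  have vcle: "l \<le> m" if "vertex_connected V (fadj G) l" for l
  proof -
    have "l \<le> card {v \<in> V. fadj G u0 v}" by (rule vc_le_deg[OF that u0(1)]) (simp add: fadj_def)
    then show ?thesis using deg0 by simp
  qed
  have vc: "vertex_connectivity V (fadj G) = m" unfolding vertex_connectivity_def
    by (rule Greatest_equality[where P="vertex_connected V (fadj G)", OF vcm vcle])
  have mm: "m = card {i. i < k \<and> w1 i + s \<noteq> 0} + card {i. i < k \<and> w2 i + (c - s) \<noteq> 0}"
    unfolding m_def I_def by (rule card_Iz)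
  show ?thesis using md vc mm unfolding V_def G_def by simp
qed


end
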